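(* Let $(r_I)_I$ be a family of idempotent functions $r_I:[0,1]^I\times[0,1]\to[0,1]^I\times[0,1]$ satisfying (1) $r_I(u,z)=(u,z)$ iff $\partial_I u=1$ or $z=0$, and (2) $r_J(f\times\mathrm{id})r_I=r_J(f\times\mathrm{id})$ for every strict $f\in\mathrm{Hom}(I,J)$. Let $(r_\psi)$, for $I$ a finite set of names and $\psi\in\mathbb{F}(I)$, be functions $[0,1]^I\times[0,1]\to[0,1]^I\times[0,1]$ satisfying: (a) $r_\psi=\mathrm{id}$ if $\psi=1_\mathbb{F}$; (b) $r_\psi=r_\psi r_I$ if $\psi\neq1_\mathbb{F}$; (c) $r_\psi(u,z)=(u,z)$ if $z=0$; (d) $r_\psi((ib)\times\mathrm{id})=((ib)\times\mathrm{id})r_{\psi(ib)}$ for $i\in I$, $b\in\{0,1\}$. Then for every morphism $f\in\mathrm{Hom}(I,J)$ and every $\psi\in\mathbb{F}(J)$, $$r_\psi\circ(f\times\mathrm{id})=(f\times\mathrm{id})\circ r_{\psi f}.$$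
   Context: Fix a countably infinite set of names. $\mathsf{dM}(J)$ is the free de Morgan algebra on $J$. The cube category $\mathcal{C}$ has finite sets of names as objects; $f\in\mathrm{Hom}(I,J)$ is a map $J\to\mathsf{dM}(I)$, composed by substitution; $f$ is strict if it never takes value $0$ or $1$. Using the de Morgan algebra $([0,1],\min,\max,1-x)$, $f\in\mathrm{Hom}(I,J)$ induces $f:[0,1]^I\to[0,1]^J$, $(fu)_j=f(j)$ evaluated at $u$. The face map $(ib)\in\mathrm{Hom}(I-\{i\},I)$ sends $i\mapsto b$, $j\mapsto j$ otherwise. The face lattice $\mathbb{F}$ is the distributive lattice generated by $(i=0),(i=1)$ for names $i$ subject to $(i=0)\wedge(i=1)=0_\mathbb{F}$; $\mathbb{F}(I)$ is the sublattice generated by generators with $i\in I$. For $\psi\in\mathbb{F}(J)$ and $f\in\mathrm{Hom}(I,J)$, $\psi f\in\mathbb{F}(I)$ is the substitution sending $(j=1)$ to $(f(j)=1)$ and $(j=0)$ to $(1-f(j)=1)$, where $r\mapsto(r=1)$ is the lattice map $\mathsf{dM}(I)\to\mathbb{F}(I)$ with $i\mapsto(i=1)$, $1-i\mapsto(i=0)$, $0\mapsto 0_\mathbb{F}$, $1\mapsto1_\mathbb{F}$; in particular $\psi(ib)$ substitutes $(i=b)\mapsto 1_\mathbb{F}$, $(i=1-b)\mapsto 0_\mathbb{F}$. For $u\in[0,1]^I$, $\partial_I u=1$ means some $u_i\in\{0,1\}$. *)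

theory Defs
  imports Complex_Main "HOL-Library.FuncSet"
begin

text \<open>Names are natural numbers (a countably infinite set); finite sets of names are
  finite sets of naturals.\<close>

datatype dmt = DVar nat | DZero | DOne | DMeet dmt dmt | DJoin dmt dmt | DNeg dmt

inductive dm_eq :: "dmt \<Rightarrow> dmt \<Rightarrow> bool" where
  dm_refl: "dm_eq x x"
| dm_sym: "dm_eq x y \<Longrightarrow> dm_eq y x"
| dm_trans: "dm_eq x y \<Longrightarrow> dm_eq y z \<Longrightarrow> dm_eq x z"
| dm_cong_meet: "dm_eq x x' \<Longrightarrow> dm_eq y y' \<Longrightarrow> dm_eq (DMeet x y) (DMeet x' y')"
| dm_cong_join: "dm_eq x x' \<Longrightarrow> dm_eq y y' \<Longrightarrow> dm_eq (DJoin x y) (DJoin x' y')"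
| dm_cong_neg: "dm_eq x x' \<Longrightarrow> dm_eq (DNeg x) (DNeg x')"
| dm_meet_assoc: "dm_eq (DMeet (DMeet x y) z) (DMeet x (DMeet y z))"
| dm_join_assoc: "dm_eq (DJoin (DJoin x y) z) (DJoin x (DJoin y z))"
| dm_meet_comm: "dm_eq (DMeet x y) (DMeet y x)"
| dm_join_comm: "dm_eq (DJoin x y) (DJoin y x)"
| dm_meet_absorb: "dm_eq (DMeet x (DJoin x y)) x"
| dm_join_absorb: "dm_eq (DJoin x (DMeet x y)) x"
| dm_distrib: "dm_eq (DMeet x (DJoin y z)) (DJoin (DMeet x y) (DMeet x z))"
| dm_meet_one: "dm_eq (DMeet x DOne) x"
| dm_join_zero: "dm_eq (DJoin x DZero) x"
| dm_meet_zero: "dm_eq (DMeet x DZero) DZero"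
| dm_join_one: "dm_eq (DJoin x DOne) DOne"
| dm_neg_neg: "dm_eq (DNeg (DNeg x)) x"
| dm_neg_meet: "dm_eq (DNeg (DMeet x y)) (DJoin (DNeg x) (DNeg y))"
| dm_neg_join: "dm_eq (DNeg (DJoin x y)) (DMeet (DNeg x) (DNeg y))"
| dm_neg_zero: "dm_eq (DNeg DZero) DOne"
| dm_neg_one: "dm_eq (DNeg DOne) DZero"

lemma equivp_dm_eq: "equivp dm_eq"
  by (intro equivpI reflpI sympI transpI) (auto intro: dm_eq.intros)

quotient_type dm = dmt / dm_eq
  by (rule equivp_dm_eq)

fun dvars :: "dmt \<Rightarrow> nat set" where
  "dvars (DVar i) = {i}"
| "dvars DZero = {}"
| "dvars DOne = {}"
| "dvars (DMeet x y) = dvars x \<union> dvars y"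
| "dvars (DJoin x y) = dvars x \<union> dvars y"
| "dvars (DNeg x) = dvars x"

definition dm_zero :: dm where "dm_zero = abs_dm DZero"
definition dm_one :: dm where "dm_one = abs_dm DOne"

definition dM :: "nat set \<Rightarrow> dm set" where
  "dM I = {abs_dm t | t. dvars t \<subseteq> I}"

text \<open>Values of
  variables are clamped into \<open>[0,1]\<close>; for points of \<open>[0,1]^I\<close> and variables in \<open>I\<close> this
  changes nothing, and it makes evaluation independent of the chosen representative
  even if the representative mentions names outside \<open>I\<close>.\<close>
fun eval_dmt :: "(nat \<Rightarrow> real) \<Rightarrow> dmt \<Rightarrow> real" where
  "eval_dmt u (DVar i) = max 0 (min 1 (u i))"
| "eval_dmt u DZero = 0"
| "eval_dmt u DOne = 1"
| "eval_dmt u (DMeet x y) = min (eval_dmt u x) (eval_dmt u y)"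
| "eval_dmt u (DJoin x y) = max (eval_dmt u x) (eval_dmt u y)"
| "eval_dmt u (DNeg x) = 1 - eval_dmt u x"

definition eval_dm :: "(nat \<Rightarrow> real) \<Rightarrow> dm \<Rightarrow> real" where
  "eval_dm u r = eval_dmt u (rep_dm r)"

text \<open>A morphism \<open>f \<in> Hom(I,J)\<close> is a map \<open>J \<rightarrow> dM(I)\<close> (values outside \<open>J\<close> are irrelevant).\<close>
definition Hom :: "nat set \<Rightarrow> nat set \<Rightarrow> (nat \<Rightarrow> dm) set" where
  "Hom I J = J \<rightarrow> dM I"

definition strict :: "nat set \<Rightarrow> (nat \<Rightarrow> dm) \<Rightarrow> bool" where
  "strict J f \<longleftrightarrow> (\<forall>j\<in>J. f j \<noteq> dm_zero \<and> f j \<noteq> dm_one)"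

definition cube :: "nat set \<Rightarrow> (nat \<Rightarrow> real) set" where
  "cube I = PiE I (\<lambda>_. {0..1})"

definition cmap :: "nat set \<Rightarrow> (nat \<Rightarrow> dm) \<Rightarrow> (nat \<Rightarrow> real) \<Rightarrow> (nat \<Rightarrow> real)" where
  "cmap J f u = restrict (\<lambda>j. eval_dm u (f j)) J"

definition cmap_id :: "nat set \<Rightarrow> (nat \<Rightarrow> dm) \<Rightarrow> (nat \<Rightarrow> real) \<times> real \<Rightarrow> (nat \<Rightarrow> real) \<times> real" where
  "cmap_id J f x = (cmap J f (fst x), snd x)"

definition face_mor :: "nat \<Rightarrow> bool \<Rightarrow> nat \<Rightarrow> dm" where
  "face_mor i b = (\<lambda>j. if j = i then (if b then dm_one else dm_zero) else abs_dm (DVar j))"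

definition boundary :: "nat set \<Rightarrow> (nat \<Rightarrow> real) \<Rightarrow> bool" where
  "boundary I u \<longleftrightarrow> (\<exists>i\<in>I. u i = 0 \<or> u i = 1)"

text \<open>\<open>FEq i b\<close> is the generator \<open>(i = b)\<close>, with \<open>b\<close> read as \<open>0\<close>/\<open>1\<close>.\<close>
datatype ft = FEq nat bool | FZero | FOne | FMeet ft ft | FJoin ft ft

inductive f_eq :: "ft \<Rightarrow> ft \<Rightarrow> bool" where
  f_refl: "f_eq x x"
| f_sym: "f_eq x y \<Longrightarrow> f_eq y x"
| f_trans: "f_eq x y \<Longrightarrow> f_eq y z \<Longrightarrow> f_eq x z"
| f_cong_meet: "f_eq x x' \<Longrightarrow> f_eq y y' \<Longrightarrow> f_eq (FMeet x y) (FMeet x' y')"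
| f_cong_join: "f_eq x x' \<Longrightarrow> f_eq y y' \<Longrightarrow> f_eq (FJoin x y) (FJoin x' y')"
| f_meet_assoc: "f_eq (FMeet (FMeet x y) z) (FMeet x (FMeet y z))"
| f_join_assoc: "f_eq (FJoin (FJoin x y) z) (FJoin x (FJoin y z))"
| f_meet_comm: "f_eq (FMeet x y) (FMeet y x)"
| f_join_comm: "f_eq (FJoin x y) (FJoin y x)"
| f_meet_absorb: "f_eq (FMeet x (FJoin x y)) x"
| f_join_absorb: "f_eq (FJoin x (FMeet x y)) x"
| f_distrib: "f_eq (FMeet x (FJoin y z)) (FJoin (FMeet x y) (FMeet x z))"
| f_meet_one: "f_eq (FMeet x FOne) x"
| f_join_zero: "f_eq (FJoin x FZero) x"
| f_meet_zero: "f_eq (FMeet x FZero) FZero"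
| f_join_one: "f_eq (FJoin x FOne) FOne"
| f_contra: "f_eq (FMeet (FEq i False) (FEq i True)) FZero"

lemma equivp_f_eq: "equivp f_eq"
  by (intro equivpI reflpI sympI transpI) (auto intro: f_eq.intros)

quotient_type face = ft / f_eq
  by (rule equivp_f_eq)

fun fvars :: "ft \<Rightarrow> nat set" where
  "fvars (FEq i b) = {i}"
| "fvars FZero = {}"
| "fvars FOne = {}"
| "fvars (FMeet x y) = fvars x \<union> fvars y"
| "fvars (FJoin x y) = fvars x \<union> fvars y"

definition face_one :: face where "face_one = abs_face FOne"

definition FL :: "nat set \<Rightarrow> face set" where
  "FL I = {abs_face t | t. fvars t \<subseteq> I}"

text \<open>The lattice map \<open>dM \<rightarrow> \<bbbF>\<close>, \<open>r \<mapsto> (r = 1)\<close> (for \<open>pos = True\<close>),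
  resp. \<open>r \<mapsto> (1 - r = 1)\<close> (for \<open>pos = False\<close>), on terms (negations pushed inwards).\<close>
fun to_ft :: "bool \<Rightarrow> dmt \<Rightarrow> ft" where
  "to_ft pos (DVar i) = FEq i pos"
| "to_ft pos DZero = (if pos then FZero else FOne)"
| "to_ft pos DOne = (if pos then FOne else FZero)"
| "to_ft pos (DMeet x y) = (if pos then FMeet (to_ft pos x) (to_ft pos y) else FJoin (to_ft pos x) (to_ft pos y))"
| "to_ft pos (DJoin x y) = (if pos then FJoin (to_ft pos x) (to_ft pos y) else FMeet (to_ft pos x) (to_ft pos y))"
| "to_ft pos (DNeg x) = to_ft (\<not> pos) x"

fun subst_ft :: "(nat \<Rightarrow> bool \<Rightarrow> ft) \<Rightarrow> ft \<Rightarrow> ft" where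
  "subst_ft s (FEq i b) = s i b"
| "subst_ft s FZero = FZero"
| "subst_ft s FOne = FOne"
| "subst_ft s (FMeet x y) = FMeet (subst_ft s x) (subst_ft s y)"
| "subst_ft s (FJoin x y) = FJoin (subst_ft s x) (subst_ft s y)"

text \<open>\<open>\<psi> f\<close>: substitution \<open>(j=1) \<mapsto> (f(j)=1)\<close>, \<open>(j=0) \<mapsto> (1 - f(j) = 1)\<close>.\<close>
definition face_sub :: "face \<Rightarrow> (nat \<Rightarrow> dm) \<Rightarrow> face" where
  "face_sub \<psi> f = abs_face (subst_ft (\<lambda>j b. to_ft b (rep_dm (f j))) (rep_face \<psi>))"

end

theory Submission
  imports Defs
begin


lemma eval_range: "0 \<le> eval_dmt u t \<and> eval_dmt u t \<le> 1"
  by (induction t) auto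

lemma dm_sound: "dm_eq s t \<Longrightarrow> eval_dmt u s = eval_dmt u t"
proof (induction rule: dm_eq.induct)
  case (dm_meet_one x) then show ?case using eval_range[of u x] by simp
next
  case (dm_join_zero x) then show ?case using eval_range[of u x] by simp
next
  case (dm_meet_zero x) then show ?case using eval_range[of u x] by simp
next
  case (dm_join_one x) then show ?case using eval_range[of u x] by simp
qed (auto simp: min_def max_def)

lemma rep_abs_dm: "dm_eq (rep_dm (abs_dm t)) t"
  using Quotient3_rep_abs[OF Quotient3_dm] equivp_reflp[OF equivp_dm_eq] by blast

lemma eval_dm_abs: "eval_dm u (abs_dm t) = eval_dmt u t"
  unfolding eval_dm_def using dm_sound[OF rep_abs_dm] by blast

lemma eval_dm_range: "0 \<le> eval_dm u r \<and> eval_dm u r \<le> 1"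
  unfolding eval_dm_def by (rule eval_range)

lemma eval_dvars: "(\<And>i. i \<in> dvars t \<Longrightarrow> u i = v i) \<Longrightarrow> eval_dmt u t = eval_dmt v t"
  by (induction t) auto

lemma half_lemma: "(eval_dmt (\<lambda>_. 1/2) t = 0 \<longrightarrow> dm_eq t DZero) \<and> (eval_dmt (\<lambda>_. 1/2) t = 1 \<longrightarrow> dm_eq t DOne)"
proof (induction t)
  case (DMeet x y)
  show ?case
  proof (intro conjI impI)
    assume "eval_dmt (\<lambda>_. 1/2) (DMeet x y) = 0"
    then have "eval_dmt (\<lambda>_. 1/2) x = 0 \<or> eval_dmt (\<lambda>_. 1/2) y = 0" by (auto simp: min_def split: if_splits)
    then show "dm_eq (DMeet x y) DZero"
    proof
      assume "eval_dmt (\<lambda>_. 1/2) x = 0"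
      then have "dm_eq x DZero" using DMeet by blast
      then have "dm_eq (DMeet x y) (DMeet DZero y)" by (blast intro: dm_eq.intros)
      moreover have "dm_eq (DMeet DZero y) (DMeet y DZero)" by (rule dm_meet_comm)
      ultimately show ?thesis by (blast intro: dm_eq.intros)
    next
      assume "eval_dmt (\<lambda>_. 1/2) y = 0"
      then have "dm_eq y DZero" using DMeet by blast
      then have "dm_eq (DMeet x y) (DMeet x DZero)" by (blast intro: dm_eq.intros)
      then show ?thesis by (blast intro: dm_eq.intros)
    qed
  next
    assume "eval_dmt (\<lambda>_. 1/2) (DMeet x y) = 1"
    then have "eval_dmt (\<lambda>_. 1/2) x = 1 \<and> eval_dmt (\<lambda>_. 1/2) y = 1"
      using eval_range[of "\<lambda>_. 1/2" x] eval_range[of "\<lambda>_. 1/2" y] by (auto simp: min_def split: if_splits)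
    then have "dm_eq x DOne" "dm_eq y DOne" using DMeet by blast+
    then have "dm_eq (DMeet x y) (DMeet DOne DOne)" by (blast intro: dm_eq.intros)
    then show "dm_eq (DMeet x y) DOne" by (blast intro: dm_eq.intros)
  qed
next
  case (DJoin x y)
  show ?case
  proof (intro conjI impI)
    assume "eval_dmt (\<lambda>_. 1/2) (DJoin x y) = 1"
    then have "eval_dmt (\<lambda>_. 1/2) x = 1 \<or> eval_dmt (\<lambda>_. 1/2) y = 1" by (auto simp: max_def split: if_splits)
    then show "dm_eq (DJoin x y) DOne"
    proof
      assume "eval_dmt (\<lambda>_. 1/2) x = 1"
      then have "dm_eq x DOne" using DJoin by blast
      then have "dm_eq (DJoin x y) (DJoin DOne y)" by (blast intro: dm_eq.intros)
      moreover have "dm_eq (DJoin DOne y) (DJoin y DOne)" by (rule dm_join_comm)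
      ultimately show ?thesis by (blast intro: dm_eq.intros)
    next
      assume "eval_dmt (\<lambda>_. 1/2) y = 1"
      then have "dm_eq y DOne" using DJoin by blast
      then have "dm_eq (DJoin x y) (DJoin x DOne)" by (blast intro: dm_eq.intros)
      then show ?thesis by (blast intro: dm_eq.intros)
    qed
  next
    assume "eval_dmt (\<lambda>_. 1/2) (DJoin x y) = 0"
    then have "eval_dmt (\<lambda>_. 1/2) x = 0 \<and> eval_dmt (\<lambda>_. 1/2) y = 0"
      using eval_range[of "\<lambda>_. 1/2" x] eval_range[of "\<lambda>_. 1/2" y] by (auto simp: max_def split: if_splits)
    then have "dm_eq x DZero" "dm_eq y DZero" using DJoin by blast+
    then have "dm_eq (DJoin x y) (DJoin DZero DZero)" by (blast intro: dm_eq.intros)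
    then show "dm_eq (DJoin x y) DZero" by (blast intro: dm_eq.intros)
  qed
next
  case (DNeg x)
  show ?case
  proof (intro conjI impI)
    assume "eval_dmt (\<lambda>_. 1/2) (DNeg x) = 0"
    then have "dm_eq x DOne" using DNeg by simp
    then have "dm_eq (DNeg x) (DNeg DOne)" by (blast intro: dm_eq.intros)
    then show "dm_eq (DNeg x) DZero" by (blast intro: dm_eq.intros)
  next
    assume "eval_dmt (\<lambda>_. 1/2) (DNeg x) = 1"
    then have "dm_eq x DZero" using DNeg by simp
    then have "dm_eq (DNeg x) (DNeg DZero)" by (blast intro: dm_eq.intros)
    then show "dm_eq (DNeg x) DOne" by (blast intro: dm_eq.intros)
  qed
qed (auto intro: dm_eq.intros)

lemma half_strict:
  assumes "r \<noteq> dm_zero" "r \<noteq> dm_one" shows "eval_dm (\<lambda>_. 1/2) r = 1/2"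
proof -
  have r: "r = abs_dm (rep_dm r)" using Quotient3_abs_rep[OF Quotient3_dm] by metis
  have "eval_dmt (\<lambda>_. 1/2) (rep_dm r) \<noteq> 0"
  proof
    assume "eval_dmt (\<lambda>_. 1/2) (rep_dm r) = 0"
    then have "dm_eq (rep_dm r) DZero" using half_lemma by blast
    then have "abs_dm (rep_dm r) = abs_dm DZero" using dm.abs_eq_iff by blast
    then show False using assms(1) r by (simp add: dm_zero_def)
  qed
  moreover have "eval_dmt (\<lambda>_. 1/2) (rep_dm r) \<noteq> 1"
  proof
    assume "eval_dmt (\<lambda>_. 1/2) (rep_dm r) = 1"
    then have "dm_eq (rep_dm r) DOne" using half_lemma by blast
    then have "abs_dm (rep_dm r) = abs_dm DOne" using dm.abs_eq_iff by blast
    then show False using assms(2) r by (simp add: dm_one_def)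
  qed
  moreover have "eval_dmt (\<lambda>_. 1/2) t \<in> {0, 1/2, 1}" for t
    by (induction t) (auto simp: min_def max_def)
  ultimately show ?thesis unfolding eval_dm_def by auto
qed



fun fsem :: "ft \<Rightarrow> (nat \<Rightarrow> real) \<Rightarrow> bool" where
  "fsem (FEq i b) u = (u i = (if b then 1 else 0))"
| "fsem FZero u = False"
| "fsem FOne u = True"
| "fsem (FMeet x y) u = (fsem x u \<and> fsem y u)"
| "fsem (FJoin x y) u = (fsem x u \<or> fsem y u)"

lemma f_sound: "f_eq a b \<Longrightarrow> fsem a u = fsem b u"
  by (induction rule: f_eq.induct) auto

lift_definition fs :: "face \<Rightarrow> (nat \<Rightarrow> real) \<Rightarrow> bool" is fsem
  using f_sound by blast

lift_definition fmeet :: "face \<Rightarrow> face \<Rightarrow> face" is FMeet by (rule f_cong_meet)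
lift_definition fjoin :: "face \<Rightarrow> face \<Rightarrow> face" is FJoin by (rule f_cong_join)
lift_definition fzero :: "face" is FZero .
lift_definition fone :: "face" is FOne .
lift_definition fgen :: "nat \<Rightarrow> bool \<Rightarrow> face" is FEq .

lemma fm_assoc: "fmeet (fmeet x y) z = fmeet x (fmeet y z)" by transfer (rule f_meet_assoc)
lemma fj_assoc: "fjoin (fjoin x y) z = fjoin x (fjoin y z)" by transfer (rule f_join_assoc)
lemma fm_comm: "fmeet x y = fmeet y x" by transfer (rule f_meet_comm)
lemma fj_comm: "fjoin x y = fjoin y x" by transfer (rule f_join_comm)
lemma fm_absorb: "fmeet x (fjoin x y) = x" by transfer (rule f_meet_absorb)
lemma fj_absorb: "fjoin x (fmeet x y) = x" by transfer (rule f_join_absorb)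
lemma f_distr: "fmeet x (fjoin y z) = fjoin (fmeet x y) (fmeet x z)" by transfer (rule f_distrib)
lemma fm_one: "fmeet x fone = x" by transfer (rule f_meet_one)
lemma fj_zero: "fjoin x fzero = x" by transfer (rule f_join_zero)
lemma fm_zero: "fmeet x fzero = fzero" by transfer (rule f_meet_zero)
lemma fj_one: "fjoin x fone = fone" by transfer (rule f_join_one)
lemma f_contr: "fmeet (fgen i False) (fgen i True) = fzero" by transfer (rule f_contra)

lemma fm_idem: "fmeet x x = x"
  by (metis fm_absorb fj_absorb)
lemma fj_idem: "fjoin x x = x"
  by (metis fm_absorb fj_absorb)

instantiation face :: bounded_lattice
begin
definition "inf_face = fmeet"
definition "sup_face = fjoin"
definition "bot_face = fzero"
definition "top_face = fone"
definition "less_eq_face x y = (fmeet x y = x)"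
definition "less_face (x::face) y = (x \<le> y \<and> x \<noteq> y)"
instance
proof
  fix x y z :: face
  show "(x < y) = (x \<le> y \<and> \<not> y \<le> x)"
    unfolding less_face_def less_eq_face_def by (metis fm_comm)
  show "x \<le> x" unfolding less_eq_face_def by (rule fm_idem)
  show "x \<le> y \<Longrightarrow> y \<le> z \<Longrightarrow> x \<le> z" unfolding less_eq_face_def by (metis fm_assoc)
  show "x \<le> y \<Longrightarrow> y \<le> x \<Longrightarrow> x = y" unfolding less_eq_face_def by (metis fm_comm)
  show "inf x y \<le> x" unfolding less_eq_face_def inf_face_def by (metis fm_assoc fm_comm fm_idem)
  show "inf x y \<le> y" unfolding less_eq_face_def inf_face_def by (metis fm_assoc fm_comm fm_idem)
  show "x \<le> y \<Longrightarrow> x \<le> z \<Longrightarrow> x \<le> inf y z" unfolding less_eq_face_def inf_face_def by (metis fm_assoc)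
  show "x \<le> sup x y" unfolding less_eq_face_def sup_face_def by (rule fm_absorb)
  show "y \<le> sup x y" unfolding less_eq_face_def sup_face_def by (metis fm_absorb fj_comm)
  show "y \<le> x \<Longrightarrow> z \<le> x \<Longrightarrow> sup y z \<le> x" unfolding less_eq_face_def sup_face_def
  proof -
    assume a: "fmeet y x = y" "fmeet z x = z"
    have b: "fjoin y x = x" "fjoin z x = x" using a by (metis fj_absorb fj_comm fm_comm)+
    have "fjoin (fjoin y z) x = x" by (metis b fj_assoc)
    then show "fmeet (fjoin y z) x = fjoin y z" by (metis fm_absorb)
  qed
  show "bot \<le> x" unfolding less_eq_face_def bot_face_def by (metis fm_zero fm_comm)
  show "x \<le> top" unfolding less_eq_face_def top_face_def by (rule fm_one)
qed
end

instance face :: distrib_lattice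
proof
  fix x y z :: face
  have d: "\<And>x y z :: face. inf x (sup y z) = sup (inf x y) (inf x z)"
    unfolding inf_face_def sup_face_def by (rule f_distr)
  show "sup x (inf y z) = inf (sup x y) (sup x z)" by (rule distrib_imp1[OF d])
qed

lemma fs_inf[simp]: "fs (inf x y) u = (fs x u \<and> fs y u)"
  unfolding inf_face_def by transfer simp
lemma fs_sup[simp]: "fs (sup x y) u = (fs x u \<or> fs y u)"
  unfolding sup_face_def by transfer simp
lemma fs_top[simp]: "fs top u" unfolding top_face_def by transfer simp
lemma fs_bot[simp]: "\<not> fs bot u" unfolding bot_face_def by transfer simp
lemma fs_gen[simp]: "fs (fgen i b) u = (u i = (if b then 1 else 0))" by transfer simp

lemma abs_face_hom:
  "abs_face (FMeet a b) = inf (abs_face a) (abs_face b)"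
  "abs_face (FJoin a b) = sup (abs_face a) (abs_face b)"
  "abs_face FZero = bot" "abs_face FOne = top" "abs_face (FEq i c) = fgen i c"
  unfolding inf_face_def sup_face_def bot_face_def top_face_def
  by (transfer, rule f_refl)+

lemma fs_abs: "fs (abs_face t) = fsem t" by transfer simp

definition conjL :: "(nat \<times> bool) list \<Rightarrow> face" where
  "conjL c = foldr (\<lambda>(i,b) x. inf (fgen i b) x) c top"
definition disjL :: "(nat \<times> bool) list list \<Rightarrow> face" where
  "disjL D = foldr (\<lambda>c x. sup (conjL c) x) D bot"

lemma conjL_simps[simp]: "conjL [] = top" "conjL ((i,b)#c) = inf (fgen i b) (conjL c)"
  by (simp_all add: conjL_def)
lemma disjL_simps[simp]: "disjL [] = bot" "disjL (c#D) = sup (conjL c) (disjL D)"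
  by (simp_all add: disjL_def)

lemma conjL_append: "conjL (c1 @ c2) = inf (conjL c1) (conjL c2)"
  by (induction c1) (auto simp: inf_assoc)
lemma disjL_append: "disjL (D1 @ D2) = sup (disjL D1) (disjL D2)"
  by (induction D1) (auto simp: sup_assoc)

lemma conj_disj: "inf (conjL c) (disjL E) = disjL (map (\<lambda>c2. c @ c2) E)"
  by (induction E) (auto simp: inf_sup_distrib1 conjL_append)

lemma disj_disj: "inf (disjL D) (disjL E) = disjL (concat (map (\<lambda>c. map (\<lambda>c2. c @ c2) E) D))"
  by (induction D) (auto simp: inf_sup_distrib2 conj_disj disjL_append)

lemma dnf_exists: "\<exists>D. abs_face t = disjL D"
proof (induction t)
  case (FEq i b) show ?case by (rule exI[of _ "[[(i,b)]]"]) (simp add: abs_face_hom)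
next
  case FZero show ?case by (rule exI[of _ "[]"]) (simp add: abs_face_hom)
next
  case FOne show ?case by (rule exI[of _ "[[]]"]) (simp add: abs_face_hom)
next
  case (FMeet x y) then show ?case by (metis abs_face_hom(1) disj_disj)
next
  case (FJoin x y) then show ?case by (metis abs_face_hom(2) disjL_append)
qed

lemma face_abs_rep: "abs_face (rep_face X) = X"
  by (rule Quotient3_abs_rep[OF Quotient3_face])

lemma face_dnf: "\<exists>D. (X::face) = disjL D"
  using dnf_exists[of "rep_face X"] face_abs_rep by metis

definition cons :: "(nat \<times> bool) list \<Rightarrow> bool" where
  "cons c \<longleftrightarrow> (\<forall>i. \<not> ((i,True) \<in> set c \<and> (i,False) \<in> set c))"
definition pt :: "(nat \<times> bool) list \<Rightarrow> nat \<Rightarrow> real" where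
  "pt c i = (if (i,True) \<in> set c then 1 else if (i,False) \<in> set c then 0 else 1/2)"

lemma conjL_le: "l \<in> set c \<Longrightarrow> conjL c \<le> fgen (fst l) (snd l)"
  by (induction c) (auto intro: le_infI2)

lemma incons_bot: "\<not> cons c \<Longrightarrow> conjL c = bot"
proof -
  assume "\<not> cons c"
  then obtain i where "(i,True) \<in> set c" "(i,False) \<in> set c" unfolding cons_def by blast
  then have "conjL c \<le> inf (fgen i False) (fgen i True)" using conjL_le by fastforce
  also have "\<dots> = bot" unfolding inf_face_def bot_face_def by (rule f_contr)
  finally show ?thesis by (simp add: bot_unique)
qed

lemma fs_conjL: "fs (conjL c) u = (\<forall>(i,b)\<in>set c. u i = (if b then 1 else 0))"
  by (induction c) auto

lemma cons_pt: "cons c \<Longrightarrow> fs (conjL c) (pt c)"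
  unfolding fs_conjL pt_def cons_def by auto

lemma pt_P: "0 \<le> pt c i \<and> pt c i \<le> 1" unfolding pt_def by auto

lemma conj_le_term: "cons c \<Longrightarrow> fsem t (pt c) \<Longrightarrow> conjL c \<le> abs_face t"
proof (induction t)
  case (FEq i b)
  then have "(i,b) \<in> set c" unfolding pt_def cons_def by (auto split: if_splits)
  then show ?case using conjL_le[of "(i,b)" c] by (simp add: abs_face_hom)
next
  case (FMeet x y) then show ?case by (simp add: abs_face_hom)
next
  case (FJoin x y) then show ?case by (auto simp add: abs_face_hom intro: le_supI1 le_supI2)
qed (auto simp: abs_face_hom)

lemma f_complete_le:
  assumes "\<And>u. (\<forall>i. 0 \<le> u i \<and> u i \<le> 1) \<Longrightarrow> fs X u \<Longrightarrow> fs Y u"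
  shows "X \<le> Y"
proof -
  obtain D where D: "X = disjL D" using face_dnf by blast
  obtain t where t: "Y = abs_face t" using face_abs_rep by metis
  have "\<forall>c\<in>set D. conjL c \<le> Y"
  proof
    fix c assume c: "c \<in> set D"
    show "conjL c \<le> Y"
    proof (cases "cons c")
      case True
      have "\<And>D. c \<in> set D \<Longrightarrow> fs (disjL D) (pt c)"
        subgoal for D using cons_pt[OF True] by (induction D) auto done
      then have "fs X (pt c)" using D c by blast
      then have "fs Y (pt c)" using assms pt_P by blast
      then show ?thesis using conj_le_term[OF True] t fs_abs by simp
    qed (simp add: incons_bot)
  qed
  then have "disjL D \<le> Y" by (induction D) auto
  then show ?thesis using D by simp
qed

lemma f_complete:
  assumes "\<And>u. (\<forall>i. 0 \<le> u i \<and> u i \<le> 1) \<Longrightarrow> fs X u = fs Y u"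
  shows "X = Y"
  using f_complete_le assms by (metis order_antisym)



definition PP :: "(nat \<Rightarrow> real) \<Rightarrow> bool" where "PP u \<longleftrightarrow> (\<forall>i. 0 \<le> u i \<and> u i \<le> 1)"

definition Fm :: "(nat \<Rightarrow> dm) \<Rightarrow> (nat \<Rightarrow> real) \<Rightarrow> nat \<Rightarrow> real" where
  "Fm f u = (\<lambda>j. eval_dm u (f j))"

lemma Fm_PP: "PP (Fm f u)" unfolding PP_def Fm_def using eval_dm_range by blast

lemma fs_rep: "fs X u = fsem (rep_face X) u" unfolding fs_def by simp

lemma fsem_to_ft: "PP u \<Longrightarrow> fsem (to_ft c t) u = (eval_dmt u t = (if c then 1 else 0))"
proof (induction t arbitrary: c)
  case (DVar i)
  then have "0 \<le> u i" "u i \<le> 1" unfolding PP_def by auto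
  then show ?case by (auto simp: min_def max_def)
next
  case (DMeet x y) then show ?case using eval_range[of u x] eval_range[of u y] by (auto simp: min_def max_def)
next
  case (DJoin x y) then show ?case using eval_range[of u x] eval_range[of u y] by (auto simp: min_def max_def)
qed auto

lemma fsem_subst: "(\<And>j c. fsem (s j c) u = (v j = (if c then 1 else 0))) \<Longrightarrow> fsem (subst_ft s t) u = fsem t v"
  by (induction t) auto

lemma fs_face_sub: "PP u \<Longrightarrow> fs (face_sub \<psi> f) u = fs \<psi> (Fm f u)"
  unfolding face_sub_def fs_abs fs_rep
  by (rule fsem_subst) (simp add: fsem_to_ft Fm_def eval_dm_def)

lemma fsem_fvars: "(\<And>i. i \<in> fvars t \<Longrightarrow> u i = v i) \<Longrightarrow> fsem t u = fsem t v"
  by (induction t) auto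

lemma FL_elem: "\<psi> \<in> FL J \<Longrightarrow> \<exists>t. fvars t \<subseteq> J \<and> \<psi> = abs_face t"
  unfolding FL_def by blast

lemma fs_FL: "\<psi> \<in> FL J \<Longrightarrow> (\<And>i. i \<in> J \<Longrightarrow> u i = v i) \<Longrightarrow> fs \<psi> u = fs \<psi> v"
  using FL_elem fs_abs fsem_fvars by (metis subsetD)

lemma face_eq: "(\<And>u. PP u \<Longrightarrow> fs X u = fs Y u) \<Longrightarrow> X = Y"
  using f_complete unfolding PP_def by blast

lemma fs_face_one[simp]: "fs face_one u" unfolding face_one_def fs_abs by simp

lemma face_sub_one: "face_sub face_one f = face_one"
  by (rule face_eq) (simp add: fs_face_sub)

lemma fvars_to_ft: "fvars (to_ft c t) = dvars t"
  by (induction t arbitrary: c) auto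

lemma fvars_subst: "fvars (subst_ft s t) \<subseteq> (\<Union>k\<in>fvars t. \<Union>c. fvars (s k c))"
  by (induction t) auto

lemma Hom_rep:
  assumes "f \<in> Hom I J"
  obtains T where "\<And>k. k \<in> J \<Longrightarrow> dvars (T k) \<subseteq> I \<and> f k = abs_dm (T k)"
proof -
  have "\<forall>k\<in>J. \<exists>t. dvars t \<subseteq> I \<and> f k = abs_dm t"
    using assms unfolding Hom_def dM_def by blast
  then show ?thesis using that by metis
qed

lemma face_sub_FL:
  assumes f: "f \<in> Hom I J" and psi: "\<psi> \<in> FL J"
  shows "face_sub \<psi> f \<in> FL I"
proof -
  obtain T where T: "\<And>k. k \<in> J \<Longrightarrow> dvars (T k) \<subseteq> I \<and> f k = abs_dm (T k)"
    using Hom_rep[OF f] by blast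
  obtain t where t: "fvars t \<subseteq> J" "\<psi> = abs_face t" using FL_elem[OF psi] by blast
  define s where "s = (\<lambda>k c. to_ft c (T k))"
  have "fvars (subst_ft s t) \<subseteq> I"
    using fvars_subst[of s t] t(1) T unfolding s_def fvars_to_ft by blast
  moreover have "face_sub \<psi> f = abs_face (subst_ft s t)"
  proof (rule face_eq)
    fix u assume u: "PP u"
    have "fs (face_sub \<psi> f) u = fsem t (Fm f u)" using fs_face_sub[OF u] t(2) fs_abs by simp
    also have "\<dots> = fsem t (\<lambda>k. eval_dmt u (T k))"
      by (rule fsem_fvars) (use t(1) T in \<open>auto simp: Fm_def eval_dm_abs\<close>)
    also have "\<dots> = fsem (subst_ft s t) u"
      by (rule fsem_subst[symmetric]) (simp add: s_def fsem_to_ft[OF u])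
    finally show "fs (face_sub \<psi> f) u = fs (abs_face (subst_ft s t)) u" by (simp add: fs_abs)
  qed
  ultimately show ?thesis unfolding FL_def by blast
qed

lemma center:
  "fvars t \<subseteq> J \<Longrightarrow> (\<And>j. j \<in> J \<Longrightarrow> v j \<noteq> 0 \<and> v j \<noteq> 1) \<Longrightarrow> fsem t v \<Longrightarrow> fsem t w"
  by (induction t) auto

lemma strict_face_sub:
  assumes psi: "\<psi> \<in> FL J" and ne: "\<psi> \<noteq> face_one" and st: "strict J f"
  shows "face_sub \<psi> f \<noteq> face_one"
proof
  assume eq: "face_sub \<psi> f = face_one"
  obtain t where t: "fvars t \<subseteq> J" "\<psi> = abs_face t" using FL_elem[OF psi] by blast
  have P0: "PP (\<lambda>_. 1/2)" unfolding PP_def by simp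
  have "fs \<psi> (Fm f (\<lambda>_. 1/2))" using fs_face_sub[OF P0, of \<psi> f] eq by simp
  then have h: "fsem t (Fm f (\<lambda>_. 1/2))" using t fs_abs by simp
  have "\<And>j. j \<in> J \<Longrightarrow> Fm f (\<lambda>_. 1/2) j \<noteq> 0 \<and> Fm f (\<lambda>_. 1/2) j \<noteq> 1"
    using st half_strict unfolding strict_def Fm_def by fastforce
  then have "\<And>w. fsem t w" using center[OF t(1) _ h] by blast
  then have "\<psi> = face_one" by (intro face_eq) (simp add: t fs_abs)
  with ne show False by simp
qed

fun dsubst :: "(nat \<Rightarrow> dmt) \<Rightarrow> dmt \<Rightarrow> dmt" where
  "dsubst \<rho> (DVar i) = \<rho> i"
| "dsubst \<rho> DZero = DZero"
| "dsubst \<rho> DOne = DOne"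
| "dsubst \<rho> (DMeet x y) = DMeet (dsubst \<rho> x) (dsubst \<rho> y)"
| "dsubst \<rho> (DJoin x y) = DJoin (dsubst \<rho> x) (dsubst \<rho> y)"
| "dsubst \<rho> (DNeg x) = DNeg (dsubst \<rho> x)"

lemma clamp_eval[simp]: "max 0 (min 1 (eval_dmt u t)) = eval_dmt u t"
  using eval_range[of u t] by simp

lemma eval_dsubst: "eval_dmt u (dsubst \<rho> t) = eval_dmt (\<lambda>m. eval_dmt u (\<rho> m)) t"
  by (induction t) (simp_all only: eval_dmt.simps dsubst.simps clamp_eval)

lemma dvars_dsubst: "dvars (dsubst \<rho> t) \<subseteq> (\<Union>m\<in>dvars t. dvars (\<rho> m))"
  by (induction t) auto

lemma comp_lemma:
  assumes f: "f \<in> Hom I J"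
    and rho: "\<And>m. m \<in> I \<Longrightarrow> dvars (\<rho> m) \<subseteq> I'"
  obtains g where "g \<in> Hom I' J"
    "\<And>w. cmap J f (cmap I (\<lambda>m. abs_dm (\<rho> m)) w) = cmap J g w"
    "\<And>\<psi>. \<psi> \<in> FL J \<Longrightarrow> face_sub (face_sub \<psi> f) (\<lambda>m. abs_dm (\<rho> m)) = face_sub \<psi> g"
proof -
  obtain T where T: "\<And>k. k \<in> J \<Longrightarrow> dvars (T k) \<subseteq> I \<and> f k = abs_dm (T k)"
    using Hom_rep[OF f] by blast
  define g where "g = (\<lambda>k. abs_dm (dsubst \<rho> (T k)))"
  have "g \<in> Hom I' J"
    unfolding Hom_def dM_def g_def using T rho dvars_dsubst by blast
  moreover have "cmap J f (cmap I (\<lambda>m. abs_dm (\<rho> m)) w) = cmap J g w" for w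
  proof -
    have "eval_dm (cmap I (\<lambda>m. abs_dm (\<rho> m)) w) (f k) = eval_dm w (g k)" if k: "k \<in> J" for k
    proof -
      have "eval_dm (cmap I (\<lambda>m. abs_dm (\<rho> m)) w) (f k) = eval_dmt (cmap I (\<lambda>m. abs_dm (\<rho> m)) w) (T k)"
        using T[OF k] by (simp add: eval_dm_abs)
      also have "\<dots> = eval_dmt (\<lambda>m. eval_dmt w (\<rho> m)) (T k)"
        by (rule eval_dvars) (use T[OF k] in \<open>auto simp: cmap_def eval_dm_abs\<close>)
      also have "\<dots> = eval_dm w (g k)" by (simp add: g_def eval_dm_abs eval_dsubst)
      finally show ?thesis .
    qed
    then show ?thesis unfolding cmap_def[of J] by (auto intro: restrict_ext)
  qed
  moreover have "face_sub (face_sub \<psi> f) (\<lambda>m. abs_dm (\<rho> m)) = face_sub \<psi> g" if psi: "\<psi> \<in> FL J" for \<psi>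
  proof (rule face_eq)
    fix u assume u: "PP u"
    have "fs (face_sub (face_sub \<psi> f) (\<lambda>m. abs_dm (\<rho> m))) u = fs \<psi> (Fm f (Fm (\<lambda>m. abs_dm (\<rho> m)) u))"
      by (simp add: fs_face_sub[OF u] fs_face_sub[OF Fm_PP])
    also have "\<dots> = fs \<psi> (Fm g u)"
    proof (rule fs_FL[OF psi])
      fix k assume k: "k \<in> J"
      show "Fm f (Fm (\<lambda>m. abs_dm (\<rho> m)) u) k = Fm g u k"
        using T[OF k] by (simp add: Fm_def g_def eval_dm_abs eval_dsubst)
    qed
    finally show "fs (face_sub (face_sub \<psi> f) (\<lambda>m. abs_dm (\<rho> m))) u = fs (face_sub \<psi> g) u"
      by (simp add: fs_face_sub[OF u])
  qed
  ultimately show ?thesis using that by blast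
qed



lemma cmap_cube: "f \<in> Hom I J \<Longrightarrow> cmap J f u \<in> cube J"
  unfolding cmap_def cube_def using eval_dm_range by auto

lemma cmap_id_cube: "f \<in> Hom I J \<Longrightarrow> x \<in> A \<times> {0..1} \<Longrightarrow> cmap_id J f x \<in> cube J \<times> {0..1}"
  unfolding cmap_id_def using cmap_cube by (auto simp: mem_Times_iff)

lemma Hom_mono: "f \<in> Hom I J \<Longrightarrow> J' \<subseteq> J \<Longrightarrow> f \<in> Hom I J'"
  unfolding Hom_def by auto

definition frho :: "nat \<Rightarrow> bool \<Rightarrow> nat \<Rightarrow> dmt" where
  "frho i b m = (if m = i then (if b then DOne else DZero) else DVar m)"

lemma face_mor_rho: "face_mor i b = (\<lambda>m. abs_dm (frho i b m))"
  unfolding face_mor_def frho_def dm_one_def dm_zero_def by auto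

lemma frho_dvars: "m \<in> I \<Longrightarrow> dvars (frho i b m) \<subseteq> I - {i}"
  unfolding frho_def by auto

lemma fm_Hom: "face_mor j b \<in> Hom (J - {j}) J"
  unfolding Hom_def dM_def face_mor_rho using frho_dvars by blast

lemma eval_fm: "eval_dm u (face_mor i b m) = (if m = i then (if b then 1 else 0) else max 0 (min 1 (u m)))"
  unfolding face_mor_rho frho_def by (simp add: eval_dm_abs)

lemma E1_cmap:
  assumes "f j = (if b then dm_one else dm_zero)"
  shows "cmap J (face_mor j b) (cmap (J - {j}) f u) = cmap J f u"
proof -
  have "eval_dm (cmap (J - {j}) f u) (face_mor j b k) = eval_dm u (f k)" if k: "k \<in> J" for k
  proof (cases "k = j")
    case True
    then show ?thesis using assms by (simp add: eval_fm eval_dm_abs dm_one_def dm_zero_def)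
  next
    case False
    then have "cmap (J - {j}) f u k = eval_dm u (f k)" using k by (simp add: cmap_def)
    moreover have "0 \<le> eval_dm u (f k)" "eval_dm u (f k) \<le> 1" using eval_dm_range by blast+
    ultimately show ?thesis using False by (simp add: eval_fm)
  qed
  then show ?thesis unfolding cmap_def[of J] by (auto intro: restrict_ext)
qed

lemma E1_face:
  assumes "f j = (if b then dm_one else dm_zero)"
  shows "face_sub (face_sub \<psi> (face_mor j b)) f = face_sub \<psi> f"
proof (rule face_eq)
  fix u assume u: "PP u"
  have "Fm (face_mor j b) (Fm f u) = Fm f u"
  proof
    fix k show "Fm (face_mor j b) (Fm f u) k = Fm f u k"
      using assms Fm_PP[of f u] unfolding PP_def
      by (auto simp: Fm_def eval_fm eval_dm_abs dm_one_def dm_zero_def)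
  qed
  then show "fs (face_sub (face_sub \<psi> (face_mor j b)) f) u = fs (face_sub \<psi> f) u"
    by (simp add: fs_face_sub[OF u] fs_face_sub[OF Fm_PP])
qed

lemma cube_decomp:
  assumes u: "u \<in> cube I" and i: "i \<in> I" and ui: "u i = (if b then 1 else 0)"
  shows "restrict u (I - {i}) \<in> cube (I - {i})"
    "cmap I (face_mor i b) (restrict u (I - {i})) = u"
proof -
  have uI: "\<forall>m\<in>I. u m \<in> {0..1}" and ue: "\<forall>m. m \<notin> I \<longrightarrow> u m = undefined"
    using u unfolding cube_def PiE_iff extensional_def by blast+
  show "restrict u (I - {i}) \<in> cube (I - {i})" using uI unfolding cube_def PiE_iff by simp
  show "cmap I (face_mor i b) (restrict u (I - {i})) = u"
  proof (rule ext)
    fix m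
    show "cmap I (face_mor i b) (restrict u (I - {i})) m = u m"
    proof (cases "m \<in> I")
      case True
      show ?thesis
      proof (cases "m = i")
        case True then show ?thesis using ui i by (simp add: cmap_def eval_fm)
      next
        case False
        have "u m \<in> {0..1}" using uI \<open>m \<in> I\<close> by blast
        then show ?thesis using False \<open>m \<in> I\<close> by (simp add: cmap_def eval_fm)
      qed
    next
      case False
      then show ?thesis using ue by (simp add: cmap_def)
    qed
  qed
qed

theorem theoremC1:
  fixes r :: "nat set \<Rightarrow> (nat \<Rightarrow> real) \<times> real \<Rightarrow> (nat \<Rightarrow> real) \<times> real"
    and rpsi :: "nat set \<Rightarrow> face \<Rightarrow> (nat \<Rightarrow> real) \<times> real \<Rightarrow> (nat \<Rightarrow> real) \<times> real"
  assumes r_maps: "\<And>I x. finite I \<Longrightarrow> x \<in> cube I \<times> {0..1} \<Longrightarrow> r I x \<in> cube I \<times> {0..1}"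
    and r_idem: "\<And>I x. finite I \<Longrightarrow> x \<in> cube I \<times> {0..1} \<Longrightarrow> r I (r I x) = r I x"
    and r_fix: "\<And>I u z. finite I \<Longrightarrow> u \<in> cube I \<Longrightarrow> z \<in> {0..1} \<Longrightarrow>
        r I (u, z) = (u, z) \<longleftrightarrow> boundary I u \<or> z = 0"
    and r_strict: "\<And>I J f x. finite I \<Longrightarrow> finite J \<Longrightarrow> f \<in> Hom I J \<Longrightarrow> strict J f \<Longrightarrow>
        x \<in> cube I \<times> {0..1} \<Longrightarrow> r J (cmap_id J f (r I x)) = r J (cmap_id J f x)"
    and rpsi_maps: "\<And>I \<psi> x. finite I \<Longrightarrow> \<psi> \<in> FL I \<Longrightarrow> x \<in> cube I \<times> {0..1} \<Longrightarrow>
        rpsi I \<psi> x \<in> cube I \<times> {0..1}"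
    and rpsi_a: "\<And>I \<psi> x. finite I \<Longrightarrow> \<psi> \<in> FL I \<Longrightarrow> \<psi> = face_one \<Longrightarrow>
        x \<in> cube I \<times> {0..1} \<Longrightarrow> rpsi I \<psi> x = x"
    and rpsi_b: "\<And>I \<psi> x. finite I \<Longrightarrow> \<psi> \<in> FL I \<Longrightarrow> \<psi> \<noteq> face_one \<Longrightarrow>
        x \<in> cube I \<times> {0..1} \<Longrightarrow> rpsi I \<psi> x = rpsi I \<psi> (r I x)"
    and rpsi_c: "\<And>I \<psi> u. finite I \<Longrightarrow> \<psi> \<in> FL I \<Longrightarrow> u \<in> cube I \<Longrightarrow>
        rpsi I \<psi> (u, 0) = (u, 0)"
    and rpsi_d: "\<And>I \<psi> i b x. finite I \<Longrightarrow> \<psi> \<in> FL I \<Longrightarrow> i \<in> I \<Longrightarrow>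
        x \<in> cube (I - {i}) \<times> {0..1} \<Longrightarrow>
        rpsi I \<psi> (cmap_id I (face_mor i b) x)
          = cmap_id I (face_mor i b) (rpsi (I - {i}) (face_sub \<psi> (face_mor i b)) x)"
  shows "\<And>I J f \<psi> x. finite I \<Longrightarrow> finite J \<Longrightarrow> f \<in> Hom I J \<Longrightarrow> \<psi> \<in> FL J \<Longrightarrow>
      x \<in> cube I \<times> {0..1} \<Longrightarrow>
      rpsi J \<psi> (cmap_id J f x) = cmap_id J f (rpsi I (face_sub \<psi> f) x)"
proof -
  have main: "rpsi J \<psi> (cmap_id J f x) = cmap_id J f (rpsi I (face_sub \<psi> f) x)"
    if "finite I" "finite J" "f \<in> Hom I J" "\<psi> \<in> FL J" "x \<in> cube I \<times> {0..1}"
    for I J f \<psi> x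
    using that
  proof (induction "card I + card J" arbitrary: I J f \<psi> x rule: less_induct)
    case less
    note fI = less.prems(1) and fJ = less.prems(2) and fH = less.prems(3)
      and psi = less.prems(4) and xc = less.prems(5)
    show ?case
    proof (cases "strict J f")
      case False
      then obtain j where j: "j \<in> J" "f j = dm_zero \<or> f j = dm_one" unfolding strict_def by blast
      define b where "b = (f j = dm_one)"
      have fj: "f j = (if b then dm_one else dm_zero)" using j b_def by auto
      have fH': "f \<in> Hom I (J - {j})" using fH Hom_mono by blast
      have fmH: "face_mor j b \<in> Hom (J - {j}) J" by (rule fm_Hom)
      define \<psi>' where "\<psi>' = face_sub \<psi> (face_mor j b)"
      have psi': "\<psi>' \<in> FL (J - {j})" unfolding \<psi>'_def using face_sub_FL[OF fmH psi] .
      have xc': "cmap_id (J - {j}) f x \<in> cube (J - {j}) \<times> {0..1}" using cmap_id_cube[OF fH' xc] .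
      have cmeq: "cmap_id J f y = cmap_id J (face_mor j b) (cmap_id (J - {j}) f y)" for y
        using E1_cmap[where f=f and j=j and b=b, OF fj] by (simp add: cmap_id_def)
      have card: "card I + card (J - {j}) < card I + card J"
        using card_Diff1_less[OF fJ j(1)] by simp
      have IH: "rpsi (J - {j}) \<psi>' (cmap_id (J - {j}) f x) = cmap_id (J - {j}) f (rpsi I (face_sub \<psi>' f) x)"
        by (rule less.hyps[OF card fI _ fH' psi' xc]) (use fJ in simp)
      have "rpsi J \<psi> (cmap_id J f x) = rpsi J \<psi> (cmap_id J (face_mor j b) (cmap_id (J - {j}) f x))"
        by (simp add: cmeq[symmetric])
      also have "\<dots> = cmap_id J (face_mor j b) (rpsi (J - {j}) \<psi>' (cmap_id (J - {j}) f x))"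
        unfolding \<psi>'_def by (rule rpsi_d[OF fJ psi j(1) xc'])
      also have "\<dots> = cmap_id J (face_mor j b) (cmap_id (J - {j}) f (rpsi I (face_sub \<psi>' f) x))"
        by (simp add: IH)
      also have "\<dots> = cmap_id J f (rpsi I (face_sub \<psi> f) x)"
        unfolding \<psi>'_def E1_face[where f=f and j=j and b=b, OF fj] by (simp add: cmeq[symmetric])
      finally show ?thesis .
    next
      case True
      note st = True
      have fxc: "cmap_id J f x \<in> cube J \<times> {0..1}" using cmap_id_cube[OF fH xc] .
      show ?thesis
      proof (cases "\<psi> = face_one")
        case True
        have "face_sub \<psi> f = face_one" using True face_sub_one by simp
        moreover have "face_sub \<psi> f \<in> FL I" using face_sub_FL[OF fH psi] .
        ultimately show ?thesis using rpsi_a[OF fJ psi True fxc] rpsi_a[OF fI _ _ xc] by simp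
      next
        case False
        define \<psi>1 where "\<psi>1 = face_sub \<psi> f"
        have psi1: "\<psi>1 \<in> FL I" unfolding \<psi>1_def using face_sub_FL[OF fH psi] .
        have ne1: "\<psi>1 \<noteq> face_one" unfolding \<psi>1_def using strict_face_sub[OF psi False st] .
        define y where "y = r I x"
        have yc: "y \<in> cube I \<times> {0..1}" unfolding y_def using r_maps[OF fI xc] .
        have ry: "r I y = y" unfolding y_def using r_idem[OF fI xc] .
        have fyc: "cmap_id J f y \<in> cube J \<times> {0..1}" using cmap_id_cube[OF fH yc] .
        have L: "rpsi J \<psi> (cmap_id J f x) = rpsi J \<psi> (cmap_id J f y)"
        proof -
          have "rpsi J \<psi> (cmap_id J f x) = rpsi J \<psi> (r J (cmap_id J f x))"
            by (rule rpsi_b[OF fJ psi False fxc])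
          also have "\<dots> = rpsi J \<psi> (r J (cmap_id J f y))"
            unfolding y_def using r_strict[OF fI fJ fH st xc] by simp
          also have "\<dots> = rpsi J \<psi> (cmap_id J f y)"
            using rpsi_b[OF fJ psi False fyc] by simp
          finally show ?thesis .
        qed
        have R: "rpsi I \<psi>1 x = rpsi I \<psi>1 y"
          unfolding y_def by (rule rpsi_b[OF fI psi1 ne1 xc])
        obtain u z where yuz: "y = (u, z)" and uc: "u \<in> cube I" and zc: "z \<in> {0..1}"
          using yc by (cases y) simp
        have "boundary I u \<or> z = 0" using r_fix[OF fI uc zc] ry yuz by simp
        then have "rpsi J \<psi> (cmap_id J f y) = cmap_id J f (rpsi I \<psi>1 y)"
        proof
          assume z: "z = 0"
          have "cmap J f u \<in> cube J" using cmap_cube[OF fH] .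
          then show ?thesis using rpsi_c[OF fJ psi] rpsi_c[OF fI psi1 uc] yuz z
            by (simp add: cmap_id_def)
        next
          assume "boundary I u"
          then obtain i where i: "i \<in> I" and ui0: "u i = 0 \<or> u i = 1" unfolding boundary_def by blast
          define b where "b = (u i = 1)"
          have ui: "u i = (if b then 1 else 0)" using ui0 b_def by auto
          define w where "w = restrict u (I - {i})"
          have wc: "w \<in> cube (I - {i})"
            unfolding w_def by (rule cube_decomp(1)[OF uc i ui])
          have uw: "cmap I (face_mor i b) w = u"
            unfolding w_def by (rule cube_decomp(2)[OF uc i ui])
          have wzc: "(w, z) \<in> cube (I - {i}) \<times> {0..1}" using wc zc by simp
          obtain g where gH: "g \<in> Hom (I - {i}) J"
            and gc: "\<And>w. cmap J f (cmap I (\<lambda>m. abs_dm (frho i b m)) w) = cmap J g w"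
            and gf: "\<And>\<psi>. \<psi> \<in> FL J \<Longrightarrow> face_sub (face_sub \<psi> f) (\<lambda>m. abs_dm (frho i b m)) = face_sub \<psi> g"
            using comp_lemma[OF fH, of "frho i b" "I - {i}"] frho_dvars[of _ I i b] by blast
          have gc': "cmap_id J f (cmap_id I (face_mor i b) p) = cmap_id J g p" for p
            using gc by (simp add: cmap_id_def face_mor_rho)
          have gf': "face_sub \<psi>1 (face_mor i b) = face_sub \<psi> g"
            unfolding \<psi>1_def face_mor_rho using gf[OF psi] .
          have card: "card (I - {i}) + card J < card I + card J"
            using card_Diff1_less[OF fI i] by simp
          have IH: "rpsi J \<psi> (cmap_id J g (w, z)) = cmap_id J g (rpsi (I - {i}) (face_sub \<psi> g) (w, z))"
            by (rule less.hyps[OF card _ fJ gH psi wzc]) (use fI in simp)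
          have yw: "y = cmap_id I (face_mor i b) (w, z)" using yuz uw by (simp add: cmap_id_def)
          have "rpsi J \<psi> (cmap_id J f y) = rpsi J \<psi> (cmap_id J g (w, z))"
            using yw gc' by simp
          also have "\<dots> = cmap_id J g (rpsi (I - {i}) (face_sub \<psi> g) (w, z))" by (rule IH)
          also have "\<dots> = cmap_id J f (cmap_id I (face_mor i b) (rpsi (I - {i}) (face_sub \<psi>1 (face_mor i b)) (w, z)))"
            using gc' gf' by simp
          also have "\<dots> = cmap_id J f (rpsi I \<psi>1 y)"
            using rpsi_d[OF fI psi1 i wzc] yw by simp
          finally show ?thesis .
        qed
        then show ?thesis using L R \<psi>1_def by simp
      qed
    qed
  qed
  show "\<And>I J f \<psi> x. finite I \<Longrightarrow> finite J \<Longrightarrow> f \<in> Hom I J \<Longrightarrow> \<psi> \<in> FL J \<Longrightarrow>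
      x \<in> cube I \<times> {0..1} \<Longrightarrow>
      rpsi J \<psi> (cmap_id J f x) = cmap_id J f (rpsi I (face_sub \<psi> f) x)"
    by (rule main)
qed

end
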